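(* Let $m<p<p_F(\sigma)=m+\frac{\sigma+2}{N}$ and $Z_0=\frac{(\sigma+2)[m(N+\sigma)-p(N-2)]}{(p-m)^2}$. (i) If a trajectory $(x,y,z)(\eta_1)$ of system (S2) with $z\ge0$ crosses the plane $\{y=-\frac{\sigma+2}{p-m}\}$ from $\{y>-\frac{\sigma+2}{p-m}\}$ into $\{y<-\frac{\sigma+2}{p-m}\}$ at some time, then it remains in $\{y<-\frac{\sigma+2}{p-m}\}$ for all later times. (ii) If a trajectory satisfies $y(\eta_{1,*})=-\frac{\sigma+2}{p-m}$ and $\dot y(\eta_{1,*})=0$ for some $\eta_{1,*}$, then it is contained in the invariant line $\{y=-\frac{\sigma+2}{p-m},\ z=Z_0\}$; in particular no other trajectory is tangent to the plane $\{y=-\frac{\sigma+2}{p-m}\}$.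
   Context: Let $N\geq1$, $m>1$, $\sigma>0$. System (S2) is $$\dot x=x(2-(m-1)y),\quad \dot y=-x-(N-2)y+z-my^2-\tfrac{p-m}{\sigma+2}xy,\quad \dot z=z(\sigma+2+(p-m)y),$$ considered for $x\ge0$, $z\ge0$. *)

theory Defs
  imports "HOL-Analysis.Analysis"
begin

definition S2_traj ::
  "nat \<Rightarrow> real \<Rightarrow> real \<Rightarrow> real \<Rightarrow> real set \<Rightarrow>
   (real \<Rightarrow> real) \<Rightarrow> (real \<Rightarrow> real) \<Rightarrow> (real \<Rightarrow> real) \<Rightarrow> bool" where
  "S2_traj N m p \<sigma> I x y z \<longleftrightarrow>
     is_interval I \<and> open I \<and> I \<noteq> {} \<and>
     (\<forall>t\<in>I. x t \<ge> 0 \<and> z t \<ge> 0) \<and>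
     (\<forall>t\<in>I.
        (x has_real_derivative x t * (2 - (m - 1) * y t)) (at t) \<and>
        (y has_real_derivative
           (- x t - (real N - 2) * y t + z t - m * (y t)\<^sup>2
            - (p - m) / (\<sigma> + 2) * x t * y t)) (at t) \<and>
        (z has_real_derivative z t * (\<sigma> + 2 + (p - m) * y t)) (at t))"

end

theory Submission imports Defs begin

lemma gron_fwd:
  fixes V V' :: "real \<Rightarrow> real" and M a b :: real
  assumes ab: "a \<le> b" and V0: "V a = 0"
    and nn: "\<And>s. a \<le> s \<Longrightarrow> s \<le> b \<Longrightarrow> V s \<ge> 0"
    and D: "\<And>s. a \<le> s \<Longrightarrow> s \<le> b \<Longrightarrow> (V has_real_derivative V' s) (at s)"
    and B: "\<And>s. a \<le> s \<Longrightarrow> s \<le> b \<Longrightarrow> \<bar>V' s\<bar> \<le> M * V s"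
  shows "V b = 0"
proof -
  let ?W = "\<lambda>s. V s * exp (- M * s)"
  have "?W b \<le> ?W a"
  proof (rule DERIV_nonpos_imp_nonincreasing[OF ab])
    fix s assume s: "a \<le> s" "s \<le> b"
    have "(?W has_real_derivative V' s * exp (- M * s) + V s * (exp (- M * s) * (- M))) (at s)"
      using D[OF s] by (auto intro!: derivative_eq_intros)
    moreover have "V' s * exp (- M * s) + V s * (exp (- M * s) * (- M)) = (V' s - M * V s) * exp (- M * s)"
      by (simp add: algebra_simps)
    moreover have "(V' s - M * V s) * exp (- M * s) \<le> 0"
      using B[OF s] by (intro mult_nonpos_nonneg) auto
    ultimately show "\<exists>y. (?W has_real_derivative y) (at s) \<and> y \<le> 0" by auto
  qed
  hence "V b * exp (- M * b) \<le> 0" using V0 by simp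
  hence "V b \<le> 0" by (simp add: mult_le_0_iff)
  thus ?thesis using nn[OF ab order.refl] by simp
qed

lemma gron_bwd:
  fixes V V' :: "real \<Rightarrow> real" and M a b :: real
  assumes ab: "a \<le> b" and V0: "V b = 0"
    and nn: "\<And>s. a \<le> s \<Longrightarrow> s \<le> b \<Longrightarrow> V s \<ge> 0"
    and D: "\<And>s. a \<le> s \<Longrightarrow> s \<le> b \<Longrightarrow> (V has_real_derivative V' s) (at s)"
    and B: "\<And>s. a \<le> s \<Longrightarrow> s \<le> b \<Longrightarrow> \<bar>V' s\<bar> \<le> M * V s"
  shows "V a = 0"
proof -
  let ?W = "\<lambda>s. V s * exp (M * s)"
  have "?W a \<le> ?W b"
  proof (rule DERIV_nonneg_imp_nondecreasing[OF ab])
    fix s assume s: "a \<le> s" "s \<le> b"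
    have "(?W has_real_derivative V' s * exp (M * s) + V s * (exp (M * s) * M)) (at s)"
      using D[OF s] by (auto intro!: derivative_eq_intros)
    moreover have "V' s * exp (M * s) + V s * (exp (M * s) * M) = (V' s + M * V s) * exp (M * s)"
      by (simp add: algebra_simps)
    moreover have "(V' s + M * V s) * exp (M * s) \<ge> 0"
      using B[OF s] by (intro mult_nonneg_nonneg) auto
    ultimately show "\<exists>y. (?W has_real_derivative y) (at s) \<and> y \<ge> 0" by auto
  qed
  hence "V a * exp (M * a) \<le> 0" using V0 by simp
  hence "V a \<le> 0" by (simp add: mult_le_0_iff)
  thus ?thesis using nn[OF order.refl ab] by simp
qed

lemma gron:
  fixes V V' L :: "real \<Rightarrow> real"
  assumes I: "is_interval I" and eta: "\<eta> \<in> I" and V0: "V \<eta> = 0"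
    and nn: "\<And>s. s \<in> I \<Longrightarrow> V s \<ge> 0"
    and D: "\<And>s. s \<in> I \<Longrightarrow> (V has_real_derivative V' s) (at s)"
    and B: "\<And>s. s \<in> I \<Longrightarrow> \<bar>V' s\<bar> \<le> L s * V s"
    and C: "continuous_on I L"
    and t: "t \<in> I"
  shows "V t = 0"
proof -
  define J where "J = {min \<eta> t..max \<eta> t}"
  have JI: "J \<subseteq> I"
  proof
    fix s assume "s \<in> J"
    hence "min \<eta> t \<le> s" "s \<le> max \<eta> t" unfolding J_def by auto
    moreover have "min \<eta> t \<in> I" "max \<eta> t \<in> I" using eta t by (auto simp: min_def max_def)
    ultimately show "s \<in> I" using I unfolding is_interval_1 by blast
  qed
  have "compact J" unfolding J_def by simp
  moreover have "continuous_on J L" using C JI continuous_on_subset by blast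
  moreover have "J \<noteq> {}" unfolding J_def by simp
  ultimately obtain s0 where "s0 \<in> J" "\<forall>s\<in>J. L s \<le> L s0"
    using continuous_attains_sup[of J L] by blast
  then obtain M where M: "\<And>s. s \<in> J \<Longrightarrow> L s \<le> M" by blast
  have BM: "\<bar>V' s\<bar> \<le> M * V s" if "s \<in> J" for s
  proof -
    have "L s * V s \<le> M * V s" using M[OF that] nn[of s] JI that by (intro mult_right_mono) auto
    thus ?thesis using B[of s] JI that by auto
  qed
  show ?thesis
  proof (cases "\<eta> \<le> t")
    case True
    show ?thesis
      by (rule gron_fwd[of \<eta> t V V' M]) (use JI BM in \<open>auto simp: J_def True intro!: nn D V0\<close>)
  next
    case False
    show ?thesis
      by (rule gron_bwd[of t \<eta> V V' M]) (use JI BM False in \<open>auto simp: J_def intro!: nn D V0\<close>)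
  qed
qed
lemma bnd:
  fixes a b K q :: real assumes q: "q \<ge> 0"
  shows "\<bar>2*a*b - 2*a^2*K + 2*q*a*b\<bar> \<le> (1 + q + 2*\<bar>K\<bar>)*(a^2+b^2)"
proof -
  have h1: "\<bar>2*a*b\<bar> \<le> a^2+b^2"
    using sum_squares_ge_zero[of "a-b" "0"] sum_squares_ge_zero[of "a+b" 0]
    by (cases "a*b \<ge> 0") (auto simp: power2_eq_square algebra_simps abs_if)
  have h2: "\<bar>2*a^2*K\<bar> \<le> 2*\<bar>K\<bar>*(a^2+b^2)"
    using mult_left_mono[of "a^2" "a^2+b^2" "\<bar>K\<bar>"] by (simp add: abs_mult mult.commute)
  have h3: "\<bar>2*q*a*b\<bar> \<le> q*(a^2+b^2)"
  proof -
    have "\<bar>2*q*a*b\<bar> = q*\<bar>2*a*b\<bar>" using q by (simp add: abs_mult)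
    also have "\<dots> \<le> q*(a^2+b^2)" using h1 q by (intro mult_left_mono) auto
    finally show ?thesis .
  qed
  have "\<bar>2*a*b - 2*a^2*K + 2*q*a*b\<bar> \<le> \<bar>2*a*b\<bar> + \<bar>2*a^2*K\<bar> + \<bar>2*q*a*b\<bar>" by linarith
  also have "\<dots> \<le> (a^2+b^2) + 2*\<bar>K\<bar>*(a^2+b^2) + q*(a^2+b^2)" using h1 h2 h3 by linarith
  also have "\<dots> = (1 + q + 2*\<bar>K\<bar>)*(a^2+b^2)" by (simp add: algebra_simps)
  finally show ?thesis .
qed

lemma partii:
  fixes N :: nat and m p \<sigma> Y0 Z0 :: real
  assumes pm: "m < p" and s2: "\<sigma> + 2 > 0"
    and Y0: "Y0 = - (\<sigma> + 2) / (p - m)"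
    and Z0: "Z0 = (real N - 2) * Y0 + m * Y0^2"
    and T: "S2_traj N m p \<sigma> I x y z" and eta: "\<eta> \<in> I" and yeta: "y \<eta> = Y0" and d: "deriv y \<eta> = 0"
    and t: "t \<in> I"
  shows "y t = Y0 \<and> z t = Z0"
proof -
  have Z0': "Z0 = (real N - 2) * Y0 + m * Y0^2" using Z0 by auto
  have hY: "(p - m) * Y0 = - (\<sigma> + 2)" using pm unfolding Y0 by simp
  have hc: "(p - m) / (\<sigma> + 2) * Y0 = -1"
  proof -
    have "(p - m) / (\<sigma> + 2) * Y0 = ((p - m) * Y0) / (\<sigma> + 2)" by simp
    also have "\<dots> = -1" using hY s2 by (simp add: divide_eq_eq)
    finally show ?thesis .
  qed
  define c where "c = (p - m) / (\<sigma> + 2)"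
  define F where "F t = - x t - (real N - 2) * y t + z t - m * (y t)\<^sup>2 - (p - m) / (\<sigma> + 2) * x t * y t" for t
  define G where "G t = z t * (\<sigma> + 2 + (p - m) * y t)" for t
  define K where "K t = c * x t + (real N - 2) + m * (y t + Y0)" for t
  have I: "is_interval I" using T unfolding S2_traj_def by auto
  have nz: "\<And>t. t \<in> I \<Longrightarrow> z t \<ge> 0" using T unfolding S2_traj_def by auto
  have Dx: "\<And>t. t \<in> I \<Longrightarrow> (x has_real_derivative x t * (2 - (m - 1) * y t)) (at t)"
    using T unfolding S2_traj_def by auto
  have Dy: "\<And>t. t \<in> I \<Longrightarrow> (y has_real_derivative F t) (at t)"
    using T unfolding S2_traj_def F_def by auto
  have Dz: "\<And>t. t \<in> I \<Longrightarrow> (z has_real_derivative G t) (at t)"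
    using T unfolding S2_traj_def G_def by auto
  have Fid: "F t = (z t - Z0) - (y t - Y0) * K t" for t
  proof -
    have "c * Y0 = -1" using hc c_def by simp
    hence "F t = - x t * (1 + c * y t) - (real N - 2) * y t + z t - m * (y t)\<^sup>2"
      unfolding F_def c_def[symmetric] by (simp add: algebra_simps)
    also have "\<dots> = - x t * (c * (y t - Y0)) - (real N - 2) * y t + z t - m * (y t)\<^sup>2"
    proof -
      have "1 + c * y t = c * (y t - Y0)" using \<open>c * Y0 = -1\<close> by (simp add: algebra_simps)
      thus ?thesis by simp
    qed
    also have "\<dots> = (z t - Z0) - (y t - Y0) * K t"
      unfolding K_def Z0' by (simp add: algebra_simps power2_eq_square)
    finally show ?thesis .
  qed
  have Gid: "G t = (p - m) * z t * (y t - Y0)" for t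
  proof -
    have "\<sigma> + 2 + (p - m) * y t = (p - m) * (y t - Y0)" using hY by (simp add: algebra_simps)
    thus ?thesis unfolding G_def by simp
  qed
  have "F \<eta> = 0" using d DERIV_imp_deriv[OF Dy[OF eta]] by simp
  hence zeta: "z \<eta> = Z0" using Fid[of \<eta>] yeta by simp
  define V where "V t = (y t - Y0)^2 + (z t - Z0)^2" for t
  define V' where "V' t = 2 * (y t - Y0) * F t + 2 * (z t - Z0) * G t" for t
  define L where "L t = 1 + (p - m) * \<bar>z t\<bar> + 2 * \<bar>K t\<bar>" for t
  have DV: "(V has_real_derivative V' s) (at s)" if "s \<in> I" for s
    unfolding V_def V'_def
    by (rule derivative_eq_intros Dy[OF that] Dz[OF that] refl | simp)+ (simp add: algebra_simps)
  have BV: "\<bar>V' s\<bar> \<le> L s * V s" if "s \<in> I" for s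
  proof -
    have "V' s = 2*(y s - Y0)*(z s - Z0) - 2*(y s - Y0)^2*K s + 2*((p-m)*z s)*(y s - Y0)*(z s - Z0)"
      unfolding V'_def Fid Gid by (simp add: algebra_simps power2_eq_square)
    moreover have "(p - m) * z s \<ge> 0" using pm nz[OF that] by simp
    ultimately show ?thesis
      using bnd[of "(p-m)*z s" "y s - Y0" "z s - Z0" "K s"] nz[OF that] pm
      unfolding L_def V_def by simp
  qed
  have cx: "continuous_on I x" by (rule continuous_at_imp_continuous_on) (metis DERIV_isCont Dx)
  have cy: "continuous_on I y" by (rule continuous_at_imp_continuous_on) (metis DERIV_isCont Dy)
  have cz: "continuous_on I z" by (rule continuous_at_imp_continuous_on) (metis DERIV_isCont Dz)
  have CL: "continuous_on I L" unfolding L_def K_def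
    by (intro continuous_intros cx cy cz)
  have "V t = 0"
    by (rule gron[OF I eta _ _ DV BV CL t]) (auto simp: V_def yeta zeta)
  thus ?thesis unfolding V_def by (simp add: sum_power2_eq_zero_iff)
qed

lemma aux: fixes q s m n :: real assumes "q \<noteq> 0"
  shows "s * (m * s - n * q) / q^2 = n * (- s / q) + m * (- s / q)^2"
  using assms by (simp add: field_simps power2_eq_square)

theorem lemma5p2:
  fixes N :: nat and m p \<sigma> :: real
  assumes N: "N \<ge> 1" and m: "m > 1" and \<sigma>: "\<sigma> > 0"
    and p: "m < p" "p < m + (\<sigma> + 2) / real N"
  defines "Y0 \<equiv> - (\<sigma> + 2) / (p - m)"
    and "Z0 \<equiv> (\<sigma> + 2) * (m * (real N + \<sigma>) - p * (real N - 2)) / (p - m)\<^sup>2"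
  shows
    "(\<forall>I x y z \<eta>1. S2_traj N m p \<sigma> I x y z \<and> \<eta>1 \<in> I \<and> y \<eta>1 = Y0 \<and>
        (\<exists>\<epsilon>>0. (\<forall>t. \<eta>1 - \<epsilon> < t \<and> t < \<eta>1 \<longrightarrow> t \<in> I \<and> y t > Y0) \<and>
                 (\<forall>t. \<eta>1 < t \<and> t < \<eta>1 + \<epsilon> \<longrightarrow> t \<in> I \<and> y t < Y0))
      \<longrightarrow> (\<forall>t\<in>I. t > \<eta>1 \<longrightarrow> y t < Y0))
   \<and> (\<forall>I x y z \<eta>. S2_traj N m p \<sigma> I x y z \<and> \<eta> \<in> I \<and> y \<eta> = Y0 \<and> deriv y \<eta> = 0
      \<longrightarrow> (\<forall>t\<in>I. y t = Y0 \<and> z t = Z0))"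
proof -
  have s2: "\<sigma> + 2 > 0" using \<sigma> by simp
  have pm: "p - m > 0" using p by simp
  have hY: "(p - m) * Y0 = - (\<sigma> + 2)" using pm unfolding Y0_def by simp
  have Z0': "Z0 = (real N - 2) * Y0 + m * Y0^2"
  proof -
    have e: "m * (real N + \<sigma>) - p * (real N - 2) = m * (\<sigma> + 2) - (real N - 2) * (p - m)"
      by (simp add: algebra_simps)
    show ?thesis unfolding Z0_def Y0_def e
      using aux[of "p - m" "\<sigma> + 2" m "real N - 2"] pm by simp
  qed
  have PII: "\<And>I x y z \<eta> t. S2_traj N m p \<sigma> I x y z \<Longrightarrow> \<eta> \<in> I \<Longrightarrow> y \<eta> = Y0 \<Longrightarrow> deriv y \<eta> = 0
      \<Longrightarrow> t \<in> I \<Longrightarrow> y t = Y0 \<and> z t = Z0"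
    by (rule partii[OF p(1) s2 Y0_def[THEN meta_eq_to_obj_eq] Z0']) auto
  have Fon: "- xx - (real N - 2) * Y0 + zz - m * Y0\<^sup>2 - (p - m) / (\<sigma> + 2) * xx * Y0 = zz - Z0"
    for xx zz
  proof -
    have "(p - m) / (\<sigma> + 2) * xx * Y0 = ((p - m) * Y0) / (\<sigma> + 2) * xx" by simp
    also have "\<dots> = - xx"
    proof -
      have "((p - m) * Y0) / (\<sigma> + 2) = -1" using hY s2 by (simp add: divide_eq_eq)
      thus ?thesis by simp
    qed
    finally show ?thesis unfolding Z0' by simp
  qed
  show ?thesis
  proof (rule conjI, goal_cases)
    case 2
    show ?case
    proof (intro allI impI ballI)
      fix I x y z \<eta> t
      assume "S2_traj N m p \<sigma> I x y z \<and> \<eta> \<in> I \<and> y \<eta> = Y0 \<and> deriv y \<eta> = 0" "t \<in> I"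
      thus "y t = Y0 \<and> z t = Z0" using PII by blast
    qed
  next
    case 1
    show ?case
    proof (intro allI impI ballI)
    fix I x y z \<eta>1 t
    assume H: "S2_traj N m p \<sigma> I x y z \<and> \<eta>1 \<in> I \<and> y \<eta>1 = Y0 \<and>
        (\<exists>\<epsilon>>0. (\<forall>t. \<eta>1 - \<epsilon> < t \<and> t < \<eta>1 \<longrightarrow> t \<in> I \<and> y t > Y0) \<and>
                 (\<forall>t. \<eta>1 < t \<and> t < \<eta>1 + \<epsilon> \<longrightarrow> t \<in> I \<and> y t < Y0))"
      and tI: "t \<in> I" and tgt: "t > \<eta>1"
    from H have T: "S2_traj N m p \<sigma> I x y z" and e1: "\<eta>1 \<in> I" and ye1: "y \<eta>1 = Y0" by auto
    from H obtain \<epsilon> where ep: "\<epsilon> > 0"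
      and right: "\<And>s. \<eta>1 < s \<Longrightarrow> s < \<eta>1 + \<epsilon> \<Longrightarrow> s \<in> I \<and> y s < Y0" by blast
    define F where "F t = - x t - (real N - 2) * y t + z t - m * (y t)\<^sup>2 - (p - m) / (\<sigma> + 2) * x t * y t" for t
    have I: "is_interval I" using T unfolding S2_traj_def by auto
    have nz: "\<And>t. t \<in> I \<Longrightarrow> z t \<ge> 0" using T unfolding S2_traj_def by auto
    have Dy: "\<And>t. t \<in> I \<Longrightarrow> (y has_real_derivative F t) (at t)"
      using T unfolding S2_traj_def F_def by auto
    have Dz: "\<And>t. t \<in> I \<Longrightarrow> (z has_real_derivative z t * (\<sigma> + 2 + (p - m) * y t)) (at t)"
      using T unfolding S2_traj_def by auto
    have FY: "\<And>s. y s = Y0 \<Longrightarrow> F s = z s - Z0" unfolding F_def using Fon by simp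
    show "y t < Y0"
    proof (rule ccontr)
      assume nt: "\<not> y t < Y0"
      have F1: "F \<eta>1 \<le> 0"
      proof (rule ccontr)
        assume "\<not> F \<eta>1 \<le> 0"
        then obtain d where d: "d > 0" "\<And>h. h > 0 \<Longrightarrow> h < d \<Longrightarrow> y \<eta>1 < y (\<eta>1 + h)"
          using DERIV_pos_inc_right[OF Dy[OF e1]] by force
        define h where "h = min d \<epsilon> / 2"
        have "h > 0" "h < d" "h < \<epsilon>" using d ep unfolding h_def by auto
        thus False using d(2)[of h] right[of "\<eta>1 + h"] ye1 by auto
      qed
      have ze1: "z \<eta>1 \<le> Z0" using F1 FY[OF ye1] by simp
      have teps: "t \<ge> \<eta>1 + \<epsilon>" using right[of t] nt tgt by force
      define a where "a = \<eta>1 + \<epsilon> / 2"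
      have aI: "a \<in> I" and ya: "y a < Y0" using right[of a] ep unfolding a_def by auto
      have at: "a < t" using teps ep unfolding a_def by simp
      have sub: "\<And>s. \<eta>1 \<le> s \<Longrightarrow> s \<le> t \<Longrightarrow> s \<in> I"
        using I e1 tI unfolding is_interval_1 by blast
      have ic: "\<And>s. \<eta>1 \<le> s \<Longrightarrow> s \<le> t \<Longrightarrow> isCont y s"
        using sub Dy DERIV_isCont by blast
      define S where "S = {a..t} \<inter> y -` {Y0}"
      have "\<exists>r. a \<le> r \<and> r \<le> t \<and> y r = Y0"
        by (rule IVT) (use ya nt at ic ep a_def in auto)
      hence Sne: "S \<noteq> {}" unfolding S_def by auto
      have "continuous_on {a..t} y"
        by (rule continuous_at_imp_continuous_on) (use ic ep a_def in auto)
      hence Scl: "closed S" unfolding S_def by (intro continuous_closed_preimage) auto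
      have Sbd: "bdd_below S" unfolding S_def by (rule bdd_belowI[of _ a]) auto
      define t2 where "t2 = Inf S"
      have t2S: "t2 \<in> S" unfolding t2_def by (rule closed_contains_Inf[OF Sne Sbd Scl])
      hence at2: "a \<le> t2" "t2 \<le> t" and yt2: "y t2 = Y0" unfolding S_def by auto
      have t2I: "t2 \<in> I" using sub at2 ep a_def by auto
      have below: "y s < Y0" if s: "\<eta>1 < s" "s < t2" for s
      proof (cases "s < \<eta>1 + \<epsilon>")
        case True thus ?thesis using right s by auto
      next
        case False
        hence as: "a \<le> s" using ep a_def by auto
        show ?thesis
        proof (rule ccontr)
          assume "\<not> y s < Y0"
          then obtain r where r: "a \<le> r" "r \<le> s" "y r = Y0"
            using IVT[of y a Y0 s] ya as ic s at2 ep a_def by force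
          hence "r \<in> S" using s at2 unfolding S_def by auto
          hence "t2 \<le> r" unfolding t2_def using Sbd by (rule cInf_lower)
          thus False using r s by simp
        qed
      qed
      have "z t2 \<le> z \<eta>1"
      proof (rule DERIV_nonpos_imp_nonincreasing[of \<eta>1 t2 z])
        show "\<eta>1 \<le> t2" using at2 ep a_def by simp
      next
        fix s assume s: "\<eta>1 \<le> s" "s \<le> t2"
        have sI: "s \<in> I" using sub s at2 by auto
        have "y s \<le> Y0" using below[of s] s ye1 yt2 by (cases "s = \<eta>1 \<or> s = t2") auto
        hence "(p - m) * y s \<le> (p - m) * Y0" using pm by (intro mult_left_mono) auto
        hence "\<sigma> + 2 + (p - m) * y s \<le> 0" using hY by simp
        hence "z s * (\<sigma> + 2 + (p - m) * y s) \<le> 0" using nz[OF sI] by (simp add: mult_nonneg_nonpos)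
        thus "\<exists>y'. (z has_real_derivative y') (at s) \<and> y' \<le> 0" using Dz[OF sI] by blast
      qed
      hence F2: "F t2 \<le> 0" using FY[OF yt2] ze1 by simp
      show False
      proof (cases "F t2 = 0")
        case True
        have "deriv y t2 = 0" using DERIV_imp_deriv[OF Dy[OF t2I]] True by simp
        hence "y a = Y0" using PII[OF T t2I yt2 _ aI] by blast
        thus False using ya by simp
      next
        case False
        hence "F t2 < 0" using F2 by simp
        then obtain d where d: "d > 0" "\<And>h. h > 0 \<Longrightarrow> h < d \<Longrightarrow> y t2 < y (t2 - h)"
          using DERIV_neg_dec_left[OF Dy[OF t2I]] by force
        define h where "h = min d (t2 - \<eta>1) / 2"
        have t2e: "t2 > \<eta>1" using at2 ep a_def by simp
        have "h > 0" "h < d" "h < t2 - \<eta>1" using d t2e unfolding h_def by auto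
        thus False using d(2)[of h] below[of "t2 - h"] yt2 by auto
      qed
    qed
    qed
  qed
qed

end
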